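(* Let $q$ be a prime power and $k,\delta,\alpha$ positive integers with $k\ge2$, $\alpha\ge3$ and $\delta>\alpha-2$. Then, with $q,k,\delta,\alpha$ fixed and $n\to\infty$, $$B_q(n,k,\delta;\alpha)=O\!\left(q^{\left(1+\frac{1}{\lfloor\alpha/2\rfloor}\right)(k-1)n}\right).$$
   Context: For a prime power $q$, $\mathcal{G}_q(n,k)$ denotes the set of all $k$-dimensional subspaces of $\mathbb{F}_q^n$. An $\alpha$-$(n,k,\delta)_q^c$ covering Grassmannian code is a subset $\mathcal{C}\subseteq\mathcal{G}_q(n,k)$ (no repeated codewords) such that every set of $\alpha$ distinct codewords of $\mathcal{C}$ spans a subspace of $\mathbb{F}_q^n$ of dimension at least $k+\delta$. $B_q(n,k,\delta;\alpha)$ denotes the maximum size of an $\alpha$-$(n,k,\delta)_q^c$ code. The implied constant in $O(\cdot)$ may depend on $q,k,\delta,\alpha$ but not on $n$. *)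

theory Defs
  imports Main "HOL-Library.Function_Algebras" "HOL-Library.Landau_Symbols"
begin

text \<open>Vectors of F_q^n are represented as functions nat => F vanishing outside {0..<n};
  the ambient vector space is the space of all functions nat => F with pointwise operations.\<close>

definition fscale :: "'a::field \<Rightarrow> (nat \<Rightarrow> 'a) \<Rightarrow> (nat \<Rightarrow> 'a)" where
  "fscale c v = (\<lambda>i. c * v i)"

global_interpretation fv: vector_space "fscale :: 'a::field \<Rightarrow> _"
  by unfold_locales (auto simp: fscale_def algebra_simps)

definition ambient :: "nat \<Rightarrow> (nat \<Rightarrow> 'a::field) set" where
  "ambient n = {v. \<forall>i\<ge>n. v i = 0}"

definition grass :: "nat \<Rightarrow> nat \<Rightarrow> (nat \<Rightarrow> 'a::field) set set" where
  "grass n k = {U. fv.subspace U \<and> U \<subseteq> ambient n \<and> fv.dim U = k}"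

definition covering_code :: "nat \<Rightarrow> nat \<Rightarrow> nat \<Rightarrow> nat \<Rightarrow> (nat \<Rightarrow> 'a::field) set set \<Rightarrow> bool" where
  "covering_code n k \<delta> \<alpha> C \<longleftrightarrow> C \<subseteq> grass n k \<and>
     (\<forall>S \<subseteq> C. card S = \<alpha> \<longrightarrow> fv.dim (fv.span (\<Union>S)) \<ge> k + \<delta>)"

definition Bq :: "'a::{finite,field} itself \<Rightarrow> nat \<Rightarrow> nat \<Rightarrow> nat \<Rightarrow> nat \<Rightarrow> nat" where
  "Bq F n k \<delta> \<alpha> = Max {card C | C :: (nat \<Rightarrow> 'a) set set. covering_code n k \<delta> \<alpha> C}"

end

theory Submission
  imports Defs "HOL-Library.FuncSet"
begin


lemma ambient_subspace: "fv.subspace (ambient n :: (nat \<Rightarrow> 'a::field) set)"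
  unfolding fv.subspace_def ambient_def fscale_def by auto

lemma finite_ambient: "finite (ambient n :: (nat \<Rightarrow> 'a::{finite,field}) set)"
  and card_ambient: "card (ambient n :: (nat \<Rightarrow> 'a::{finite,field}) set) \<le> card (UNIV :: 'a set) ^ n"
proof -
  let ?P = "PiE {..<n} (\<lambda>_. (UNIV :: 'a set))"
  let ?g = "\<lambda>f::nat\<Rightarrow>'a. \<lambda>i. if i < n then f i else 0"
  have sub: "ambient n \<subseteq> ?g ` ?P"
  proof
    fix v :: "nat \<Rightarrow> 'a" assume "v \<in> ambient n"
    hence "v = ?g (restrict v {..<n})" by (auto simp: ambient_def fun_eq_iff)
    moreover have "restrict v {..<n} \<in> ?P" by auto
    ultimately show "v \<in> ?g ` ?P" by blast
  qed
  have fP: "finite ?P" by (simp add: finite_PiE)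
  show "finite (ambient n :: (nat \<Rightarrow> 'a) set)" using sub fP finite_subset by blast
  have "card (ambient n :: (nat \<Rightarrow> 'a) set) \<le> card (?g ` ?P)" using sub fP by (simp add: card_mono)
  also have "\<dots> \<le> card ?P" using card_image_le fP by blast
  also have "\<dots> = card (UNIV :: 'a set) ^ n" by (simp add: card_PiE)
  finally show "card (ambient n :: (nat \<Rightarrow> 'a) set) \<le> card (UNIV :: 'a set) ^ n" .
qed

lemma span_ambient: "B \<subseteq> ambient n \<Longrightarrow> fv.span B \<subseteq> ambient n"
  using fv.span_minimal ambient_subspace by blast

lemma dim_mono_amb:
  fixes A B :: "(nat \<Rightarrow> 'a::{finite,field}) set"
  assumes "A \<subseteq> fv.span B" "B \<subseteq> ambient n"
  shows "fv.dim A \<le> fv.dim B"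
proof -
  obtain BB where BB: "BB \<subseteq> B" "fv.independent BB" "B \<subseteq> fv.span BB" "card BB = fv.dim B"
    using fv.basis_exists by blast
  have fin: "finite BB" by (rule finite_subset[OF _ finite_ambient]) (use BB(1) assms(2) in blast)
  have "A \<subseteq> fv.span BB" using assms(1) BB(3)
    by (metis fv.span_mono fv.span_span subset_trans)
  then show ?thesis using fv.dim_le_card[OF _ fin] BB(4) by simp
qed

lemma dim_union_le:
  fixes B X :: "(nat \<Rightarrow> 'a::{finite,field}) set"
  assumes "B \<subseteq> ambient n" "finite X"
  shows "fv.dim (B \<union> X) \<le> fv.dim B + card X"
proof -
  obtain BB where BB: "BB \<subseteq> B" "fv.independent BB" "B \<subseteq> fv.span BB" "card BB = fv.dim B"
    using fv.basis_exists by blast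
  have fin: "finite BB" by (rule finite_subset[OF _ finite_ambient]) (use BB(1) assms(1) in blast)
  have "B \<union> X \<subseteq> fv.span (BB \<union> X)"
    using BB(3) fv.span_mono[of BB "BB \<union> X"] fv.span_superset[of "BB \<union> X"] by blast
  hence "fv.dim (B \<union> X) \<le> card (BB \<union> X)" using fv.dim_le_card fin assms(2) by blast
  also have "\<dots> \<le> card BB + card X" by (rule card_Un_le)
  finally show ?thesis using BB(4) by simp
qed

lemma indep_card_le_dim:
  fixes S X :: "(nat \<Rightarrow> 'a::{finite,field}) set"
  assumes "fv.independent S" "S \<subseteq> X" "X \<subseteq> ambient n"
  shows "card S \<le> fv.dim X"
proof -
  obtain BB where BB: "BB \<subseteq> X" "fv.independent BB" "X \<subseteq> fv.span BB" "card BB = fv.dim X"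
    using fv.basis_exists by blast
  have fin: "finite BB" by (rule finite_subset[OF _ finite_ambient]) (use BB(1) assms(3) in blast)
  show ?thesis using fv.independent_span_bound[OF fin assms(1)] assms(2) BB by auto
qed

lemma subspace_eq_dim:
  fixes A B :: "(nat \<Rightarrow> 'a::{finite,field}) set"
  assumes "fv.subspace A" "fv.subspace B" "A \<subseteq> B" "B \<subseteq> ambient n" "fv.dim B \<le> fv.dim A"
  shows "A = B"
proof (rule ccontr)
  assume ne: "A \<noteq> B"
  then obtain y where y: "y \<in> B" "y \<notin> A" using assms(3) by blast
  obtain BA where BA: "BA \<subseteq> A" "fv.independent BA" "A \<subseteq> fv.span BA" "card BA = fv.dim A"
    using fv.basis_exists by blast
  have fin: "finite BA" by (rule finite_subset[OF _ finite_ambient]) (use BA(1) assms(3,4) in blast)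
  have "fv.span BA \<subseteq> A" using BA(1) assms(1) fv.span_minimal by blast
  hence "y \<notin> fv.span BA" using y by blast
  hence ind: "fv.independent (insert y BA)" using BA(2) fv.independent_insertI by blast
  have "card (insert y BA) \<le> fv.dim B"
    using indep_card_le_dim[OF ind, of B n] BA(1) assms(3,4) y by blast
  moreover have "y \<notin> BA" using y BA(1) by blast
  ultimately show False using fin BA(4) assms(5) by simp
qed

lemma extend_by_vector:
  fixes X W :: "(nat \<Rightarrow> 'a::{finite,field}) set"
  assumes "fv.subspace X" "X \<subseteq> ambient n" "fv.dim X = k" "fv.subspace W" "W \<subseteq> X"
     "fv.dim W + 1 = k" "x \<in> X" "x \<notin> W"
  shows "X \<subseteq> fv.span (insert x W)"
proof (rule ccontr)
  assume "\<not> X \<subseteq> fv.span (insert x W)"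
  then obtain y where y: "y \<in> X" "y \<notin> fv.span (insert x W)" by blast
  obtain BW where BW: "BW \<subseteq> W" "fv.independent BW" "W \<subseteq> fv.span BW" "card BW = fv.dim W"
    using fv.basis_exists by blast
  have fin: "finite BW" by (rule finite_subset[OF _ finite_ambient]) (use BW(1) assms(2,5) in blast)
  have spW: "fv.span BW = W" using BW assms(4) fv.span_subspace by blast
  have i1: "fv.independent (insert x BW)" using spW assms(8) BW(2) fv.independent_insertI by blast
  have "fv.span (insert x BW) = fv.span (insert x W)"
    by (metis spW fv.span_insert fv.span_span)
  hence yn: "y \<notin> fv.span (insert x BW)" using y by simp
  hence i2: "fv.independent (insert y (insert x BW))" using i1 fv.independent_insertI by blast
  have "card (insert y (insert x BW)) \<le> k"
    using indep_card_le_dim[OF i2, of X n] assms BW(1) y by auto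
  moreover have "x \<notin> BW" using BW(1) assms(8) by blast
  moreover have "y \<notin> insert x BW" using yn fv.span_base by metis
  ultimately show False using fin BW(4) assms(6) by simp
qed



lemma grass_sub: "U \<in> grass n k \<Longrightarrow> U \<subseteq> ambient n"
  and grass_subspace: "U \<in> grass n k \<Longrightarrow> fv.subspace U"
  and grass_dim: "U \<in> grass n k \<Longrightarrow> fv.dim U = k"
  by (auto simp: grass_def)

lemma exists_outside:
  fixes U W :: "(nat \<Rightarrow> 'a::{finite,field}) set"
  assumes "U \<in> grass n k" "W \<in> grass n (k-1)" "k \<ge> 1"
  shows "\<exists>x\<in>U. x \<notin> W"
proof (rule ccontr)
  assume "\<not> ?thesis"
  hence "U \<subseteq> fv.span W" using fv.span_superset by blast
  hence "fv.dim U \<le> fv.dim W" using dim_mono_amb grass_sub[OF assms(2)] by blast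
  thus False using assms by (simp add: grass_def)
qed

lemma hyper_extend:
  fixes U W :: "(nat \<Rightarrow> 'a::{finite,field}) set"
  assumes "U \<in> grass n k" "W \<in> grass n (k-1)" "k \<ge> 1" "W \<subseteq> U" "x \<in> U" "x \<notin> W"
  shows "U \<subseteq> fv.span (insert x W)"
  using extend_by_vector[of U n k W x] assms by (auto simp: grass_def)

lemma two_hyper:
  fixes U W1 W2 B :: "(nat \<Rightarrow> 'a::{finite,field}) set"
  assumes "U \<in> grass n k" "W1 \<in> grass n (k-1)" "W2 \<in> grass n (k-1)" "k \<ge> 1"
    "W1 \<subseteq> U" "W2 \<subseteq> U" "W1 \<noteq> W2" "W1 \<subseteq> fv.span B" "W2 \<subseteq> fv.span B"
  shows "U \<subseteq> fv.span B"
proof -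
  have "\<not> W2 \<subseteq> W1"
    using subspace_eq_dim[of W2 W1 n] assms by (auto simp: grass_def)
  then obtain y where y: "y \<in> W2" "y \<notin> W1" by blast
  have "U \<subseteq> fv.span (insert y W1)" using hyper_extend[OF assms(1,2,4,5)] y assms(6) by blast
  also have "\<dots> \<subseteq> fv.span B"
    using assms(8,9) y fv.span_minimal[of "insert y W1" "fv.span B"] by auto
  finally show ?thesis .
qed

lemma hyper_exists:
  fixes U :: "(nat \<Rightarrow> 'a::{finite,field}) set"
  assumes "U \<in> grass n k" "k \<ge> 2"
  shows "\<exists>W \<in> grass n (k-1). W \<subseteq> U \<and> W \<noteq> a"
proof -
  obtain BU where BU: "BU \<subseteq> U" "fv.independent BU" "U \<subseteq> fv.span BU" "card BU = fv.dim U"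
    using fv.basis_exists by blast
  have cB: "card BU = k" using BU(4) assms(1) by (simp add: grass_def)
  hence fin: "finite BU" using assms(2) card.infinite by fastforce
  obtain b1 where b1: "b1 \<in> BU" using cB assms(2) by fastforce
  have "card (BU - {b1}) \<ge> 1" using cB assms(2) b1 fin by simp
  hence "BU - {b1} \<noteq> {}" by (metis card.empty not_one_le_zero)
  then obtain b2 where b2: "b2 \<in> BU" "b2 \<noteq> b1" by blast
  have Uss: "fv.subspace U" "U \<subseteq> ambient n" using assms(1) by (auto simp: grass_def)
  have mk: "fv.span (BU - {b}) \<in> grass n (k-1) \<and> fv.span (BU - {b}) \<subseteq> U" if "b \<in> BU" for b
  proof -
    have i: "fv.independent (BU - {b})" using BU(2) fv.independent_mono by blast
    have "fv.dim (fv.span (BU - {b})) = k - 1"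
      using fv.dim_span_eq_card_independent[OF i] cB that fin by simp
    moreover have "fv.span (BU - {b}) \<subseteq> U" using BU(1) Uss(1) fv.span_minimal by blast
    ultimately show ?thesis using Uss by (auto simp: grass_def)
  qed
  have "b2 \<in> fv.span (BU - {b1})" by (rule fv.span_base) (use b2 in blast)
  moreover have "b2 \<notin> fv.span (BU - {b2})" using BU(2) b2(1) fv.dependent_def by metis
  ultimately have "fv.span (BU - {b1}) \<noteq> fv.span (BU - {b2})" by blast
  hence "fv.span (BU - {b1}) \<noteq> a \<or> fv.span (BU - {b2}) \<noteq> a" by blast
  thus ?thesis using mk[OF b1] mk[OF b2(1)] by blast
qed

lemma finite_grass: "finite (grass n k :: (nat \<Rightarrow> 'a::{finite,field}) set set)"
proof -
  have "grass n k \<subseteq> Pow (ambient n :: (nat \<Rightarrow> 'a) set)" by (auto simp: grass_def)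
  thus ?thesis using finite_ambient finite_Pow_iff finite_subset by metis
qed

lemma card_grass:
  "card (grass n k :: (nat \<Rightarrow> 'a::{finite,field}) set set) \<le> card (UNIV :: 'a set) ^ (k * n)"
proof -
  let ?L = "{xs. set xs \<subseteq> (ambient n :: (nat \<Rightarrow> 'a) set) \<and> length xs = k}"
  have "grass n k \<subseteq> (\<lambda>xs. fv.span (set xs)) ` ?L"
  proof
    fix U :: "(nat \<Rightarrow> 'a) set" assume U: "U \<in> grass n k"
    obtain BU where BU: "BU \<subseteq> U" "fv.independent BU" "U \<subseteq> fv.span BU" "card BU = fv.dim U"
      using fv.basis_exists by blast
    have fin: "finite BU" by (rule finite_subset[OF _ finite_ambient]) (use BU(1) grass_sub[OF U] in blast)
    obtain xs where xs: "set xs = BU" "distinct xs" using finite_distinct_list[OF fin] by blast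
    have "fv.span BU = U" using BU grass_subspace[OF U] fv.span_subspace by blast
    moreover have "length xs = k" using xs BU(4) grass_dim[OF U] distinct_card by metis
    ultimately show "U \<in> (\<lambda>xs. fv.span (set xs)) ` ?L" using xs BU(1) grass_sub[OF U] by auto
  qed
  hence "card (grass n k :: (nat \<Rightarrow> 'a) set set) \<le> card ((\<lambda>xs. fv.span (set xs)) ` ?L)"
    by (intro card_mono finite_imageI finite_lists_length_eq finite_ambient)
  also have "\<dots> \<le> card ?L" using card_image_le finite_lists_length_eq[OF finite_ambient] by blast
  also have "\<dots> = card (ambient n :: (nat \<Rightarrow> 'a) set) ^ k"
    using card_lists_length_eq[OF finite_ambient] by blast
  also have "\<dots> \<le> (card (UNIV :: 'a set) ^ n) ^ k" using card_ambient power_mono by blast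
  finally show ?thesis by (simp add: power_mult[symmetric] mult.commute)
qed



lemma addone:
  fixes S U W :: "(nat \<Rightarrow> 'a::{finite,field}) set"
  assumes "S \<subseteq> ambient n" "U \<in> grass n k" "W \<in> grass n (k-1)" "k \<ge> 1" "W \<subseteq> U" "W \<subseteq> fv.span S"
  shows "fv.dim (S \<union> U) \<le> fv.dim S + 1"
proof -
  obtain x where x: "x \<in> U" "x \<notin> W" using exists_outside[OF assms(2,3,4)] by blast
  have "U \<subseteq> fv.span (insert x W)" using hyper_extend[OF assms(2,3,4,5) x] .
  also have "\<dots> \<subseteq> fv.span (S \<union> {x})"
    using assms(6) fv.span_superset[of "S \<union> {x}"] fv.span_mono[of S "S \<union> {x}"]
      fv.span_minimal[of "insert x W" "fv.span (S \<union> {x})"] by auto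
  finally have "S \<union> U \<subseteq> fv.span (S \<union> {x})" using fv.span_superset[of "S \<union> {x}"] by blast
  moreover have "S \<union> {x} \<subseteq> ambient n" using assms(1,2) x(1) grass_sub by blast
  ultimately have "fv.dim (S \<union> U) \<le> fv.dim (S \<union> {x})" using dim_mono_amb by blast
  also have "\<dots> \<le> fv.dim S + card {x}" using dim_union_le[OF assms(1)] by blast
  finally show ?thesis by simp
qed

lemma addzero:
  fixes S U :: "(nat \<Rightarrow> 'a::{finite,field}) set"
  assumes "S \<subseteq> ambient n" "U \<subseteq> fv.span S"
  shows "fv.dim (S \<union> U) \<le> fv.dim S"
  using dim_mono_amb[OF _ assms(1)] assms(2) fv.span_superset[of S] by blast

locale cov =
  fixes n k \<delta> \<alpha> :: nat and C :: "(nat \<Rightarrow> 'a::{finite,field}) set set"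
  assumes k2: "k \<ge> 2" and a3: "\<alpha> \<ge> 3" and dl: "\<alpha> \<le> \<delta> + 1"
    and code: "covering_code n k \<delta> \<alpha> C"
begin

abbreviation "Hyp \<equiv> (grass n (k-1) :: (nat \<Rightarrow> 'a) set set)"
definition deg where "deg D W = card {U\<in>D. W \<subseteq> U}"
definition Vert where "Vert D = {W\<in>Hyp. \<exists>U\<in>D. W \<subseteq> U}"
definition mindeg where "mindeg d D \<longleftrightarrow> (\<forall>W\<in>Vert D. deg D W \<ge> d)"

lemma C_grass: "C \<subseteq> grass n k" using code by (simp add: covering_code_def)
lemma finite_C: "finite C" by (rule finite_subset[OF C_grass finite_grass])
lemma cover: "S \<subseteq> C \<Longrightarrow> card S = \<alpha> \<Longrightarrow> k + \<delta> \<le> fv.dim (\<Union>S)"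
  using code fv.dim_span by (simp add: covering_code_def)

lemma finite_Vert: "finite (Vert D)"
  by (rule finite_subset[OF _ finite_grass]) (auto simp: Vert_def)

lemma core:
  assumes "finite D"
  shows "\<exists>D'\<subseteq>D. mindeg d D' \<and> card D \<le> card D' + d * card (Vert D - Vert D')"
  using assms
proof (induction D rule: finite_psubset_induct)
  case (psubset D)
  show ?case
  proof (cases "mindeg d D")
    case True
    thus ?thesis by auto
  next
    case False
    then obtain W where W: "W \<in> Vert D" "deg D W < d" by (auto simp: mindeg_def not_le)
    define D1 where "D1 = D - {U\<in>D. W \<subseteq> U}"
    have ps: "D1 \<subset> D" using W(1) by (auto simp: D1_def Vert_def)
    from psubset.IH[OF ps] obtain D' where D': "D' \<subseteq> D1" "mindeg d D'"
      "card D1 \<le> card D' + d * card (Vert D1 - Vert D')" by blast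
    have sA: "{U\<in>D. W \<subseteq> U} \<subseteq> D" by blast
    have fA: "finite {U\<in>D. W \<subseteq> U}" using psubset.hyps by simp
    have cD: "card D = card D1 + deg D W"
      unfolding D1_def deg_def using card_Diff_subset[OF fA sA] card_mono[OF psubset.hyps sA] by simp
    have V1: "Vert D1 \<subseteq> Vert D" "W \<notin> Vert D1" "Vert D' \<subseteq> Vert D1"
      using D'(1) by (auto simp: Vert_def D1_def)
    have "insert W (Vert D1 - Vert D') \<subseteq> Vert D - Vert D'" using V1 W(1) by blast
    hence "card (insert W (Vert D1 - Vert D')) \<le> card (Vert D - Vert D')"
      using finite_Vert by (intro card_mono) auto
    hence "card (Vert D1 - Vert D') + 1 \<le> card (Vert D - Vert D')"
      using V1(2) finite_Vert by simp
    hence "d * (card (Vert D1 - Vert D') + 1) \<le> d * card (Vert D - Vert D')"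
      using mult_le_mono2 by blast
    hence "card D \<le> card D' + d * card (Vert D - Vert D')"
      using cD D'(3) W(2) by (simp add: algebra_simps)
    thus ?thesis using D' ps by blast
  qed
qed

end


context cov begin

lemma k1: "k \<ge> 1" using k2 by simp

lemma spanA:
  assumes DC: "D \<subseteq> C" and md: "mindeg d D" and da: "\<alpha> \<le> d"
    and T: "T \<subseteq> D" "T \<noteq> {}" "card T \<le> \<alpha>"
  shows "k + card T \<le> fv.dim (\<Union>T) + 1"
proof -
  have finT: "finite T" by (rule finite_subset[OF _ finite_C]) (use T(1) DC in blast)
  obtain U where U: "U \<in> T" using T(2) by blast
  have UG: "U \<in> grass n k" using U T(1) DC C_grass by blast
  obtain W where W: "W \<in> Hyp" "W \<subseteq> U" using hyper_exists[OF UG k2] by blast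
  have "W \<in> Vert D" using W U T(1) by (auto simp: Vert_def)
  hence dW: "d \<le> card {U'\<in>D. W \<subseteq> U'}" using md by (auto simp: mindeg_def deg_def)
  define P where "P = {U'\<in>D. W \<subseteq> U'} - T"
  have finD: "finite D" by (rule finite_subset[OF _ finite_C]) (use DC in blast)
  have "card {U'\<in>D. W \<subseteq> U'} - card T \<le> card P"
    unfolding P_def by (rule diff_card_le_card_Diff) (use finT in auto)
  hence "\<alpha> - card T \<le> card P" using dW da by linarith
  then obtain R where R: "R \<subseteq> P" "card R = \<alpha> - card T" "finite R"
    by (rule obtain_subset_with_card_n)
  have RD: "R \<subseteq> D" "\<forall>U'\<in>R. W \<subseteq> U'" "R \<inter> T = {}" using R(1) by (auto simp: P_def)
  have "T \<inter> R = {}" using RD(3) by blast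
  hence "card (T \<union> R) = \<alpha>" using card_Un_disjoint[OF finT R(3)] R(2) T(3) by simp
  moreover have "T \<union> R \<subseteq> C" using T(1) RD(1) DC by blast
  ultimately have big: "k + \<delta> \<le> fv.dim (\<Union>(T \<union> R))" using cover by blast
  have RG: "U' \<in> grass n k" if "U' \<in> R" for U' using that RD(1) DC C_grass by blast
  define f where "f U' = (SOME x. x \<in> U' \<and> x \<notin> W)" for U'
  have f: "f U' \<in> U' \<and> f U' \<notin> W" if "U' \<in> R" for U'
    unfolding f_def using exists_outside[OF RG[OF that] W(1) k1] by (metis (mono_tags, lifting) someI_ex)
  have TA: "\<Union>T \<subseteq> ambient n" using T(1) DC C_grass grass_sub by blast
  have XA: "f ` R \<subseteq> ambient n" using f RG grass_sub by blast
  have "\<Union>(T \<union> R) \<subseteq> fv.span (\<Union>T \<union> f ` R)"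
  proof
    fix y assume "y \<in> \<Union>(T \<union> R)"
    then obtain U' where U': "U' \<in> T \<union> R" "y \<in> U'" by blast
    show "y \<in> fv.span (\<Union>T \<union> f ` R)"
    proof (cases "U' \<in> T")
      case True show ?thesis by (rule fv.span_base) (use U' True in blast)
    next
      case False
      hence UR: "U' \<in> R" using U' by blast
      have "U' \<subseteq> fv.span (insert (f U') W)"
        by (rule hyper_extend[OF RG[OF UR] W(1) k1]) (use RD(2) UR f[OF UR] in auto)
      also have "\<dots> \<subseteq> fv.span (\<Union>T \<union> f ` R)"
        by (rule fv.span_mono) (use W(2) U UR in blast)
      finally show ?thesis using U'(2) by blast
    qed
  qed
  hence "fv.dim (\<Union>(T \<union> R)) \<le> fv.dim (\<Union>T \<union> f ` R)"
    using dim_mono_amb TA XA by (metis Un_subset_iff)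
  also have "\<dots> \<le> fv.dim (\<Union>T) + card (f ` R)" using dim_union_le[OF TA] R(3) by blast
  also have "\<dots> \<le> fv.dim (\<Union>T) + card R" using card_image_le[OF R(3)] by simp
  finally show ?thesis using big R(2) T(3) dl by linarith
qed

definition hyp where "hyp U a = (SOME W. W \<in> Hyp \<and> W \<subseteq> U \<and> W \<noteq> a)"

lemma hyp: "U \<in> grass n k \<Longrightarrow> hyp U a \<in> Hyp \<and> hyp U a \<subseteq> U \<and> hyp U a \<noteq> a"
  unfolding hyp_def using hyper_exists[OF _ k2, of U n a] by (metis (mono_tags, lifting) someI_ex)

primrec endW where
  "endW v [] = v"
| "endW v (U # ws) = hyp U (endW v ws)"

primrec valid where
  "valid D v [] = True"
| "valid D v (U # ws) = (valid D v ws \<and> U \<in> D \<and> endW v ws \<subseteq> U \<and> U \<notin> set ws)"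

end


context cov begin

lemma union_amb: "D \<subseteq> C \<Longrightarrow> set ws \<subseteq> D \<Longrightarrow> \<Union>(set ws) \<subseteq> ambient n"
  using C_grass grass_sub by blast

context
  fixes D :: "(nat \<Rightarrow> 'a) set set" and v
  assumes DC: "D \<subseteq> C" and vH: "v \<in> Hyp"
begin

lemma valid_sub: "valid D v ws \<Longrightarrow> set ws \<subseteq> D" by (induction ws) auto
lemma valid_distinct: "valid D v ws \<Longrightarrow> distinct ws" by (induction ws) auto
lemma valid_G: "valid D v ws \<Longrightarrow> U \<in> set ws \<Longrightarrow> U \<in> grass n k"
  using valid_sub DC C_grass by blast
lemma valid_append: "valid D v (xs @ ys) \<Longrightarrow> valid D v ys" by (induction xs) auto

lemma endW_H: "valid D v ws \<Longrightarrow> endW v ws \<in> Hyp"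
proof (induction ws)
  case Nil thus ?case using vH by simp
next
  case (Cons U ws)
  have "U \<in> grass n k" using valid_G[OF Cons.prems] by simp
  thus ?case using hyp by simp
qed

lemma endW_cons: "valid D v (U # ws) \<Longrightarrow>
   endW v (U # ws) \<subseteq> U \<and> endW v (U # ws) \<noteq> endW v ws \<and> endW v ws \<subseteq> U \<and> U \<in> grass n k"
  using valid_G[of "U # ws" U] hyp[of U "endW v ws"] by auto

lemma endW_sub: "valid D v ws \<Longrightarrow> endW v ws \<subseteq> v \<union> \<Union>(set ws)"
  by (cases ws) (use endW_cons in auto)

lemma v_sub: "valid D v ws \<Longrightarrow> ws \<noteq> [] \<Longrightarrow> v \<subseteq> \<Union>(set ws)"
proof (induction ws)
  case Nil thus ?case by simp
next
  case (Cons U ws)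
  show ?case
  proof (cases "ws = []")
    case True thus ?thesis using endW_cons[OF Cons.prems(1)] by auto
  next
    case False thus ?thesis using Cons by auto
  qed
qed

lemma v_amb: "v \<subseteq> ambient n" using vH grass_sub by blast

lemma fwd_dim: "valid D v ws \<Longrightarrow> fv.dim (v \<union> \<Union>(set ws)) \<le> (k - 1) + length ws"
proof (induction ws)
  case Nil thus ?case using grass_dim[OF vH] by simp
next
  case (Cons U ws)
  have vw: "valid D v ws" using Cons.prems by simp
  define S where "S = v \<union> \<Union>(set ws)"
  have SA: "S \<subseteq> ambient n" unfolding S_def using v_amb union_amb[OF DC valid_sub[OF vw]] by blast
  have e: "endW v ws \<subseteq> U" "U \<in> grass n k" using endW_cons[OF Cons.prems] by auto
  have "endW v ws \<subseteq> fv.span S" using endW_sub[OF vw] fv.span_superset[of S] unfolding S_def by blast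
  hence "fv.dim (S \<union> U) \<le> fv.dim S + 1" using addone[OF SA e(2) endW_H[OF vw] k1 e(1)] by blast
  moreover have "v \<union> \<Union>(set (U # ws)) = S \<union> U" unfolding S_def by auto
  ultimately have "fv.dim (v \<union> \<Union>(set (U # ws))) \<le> fv.dim S + 1" by simp
  moreover have "fv.dim S \<le> k - 1 + length ws" using Cons.IH[OF vw] unfolding S_def .
  ultimately show ?case by simp
qed

lemma rev_dim: "valid D v (xs @ ys) \<Longrightarrow> endW v (xs @ ys) \<subseteq> fv.span B \<Longrightarrow> B \<subseteq> ambient n \<Longrightarrow>
   fv.dim (B \<union> \<Union>(set xs)) \<le> fv.dim B + card {Y \<in> set xs. \<not> Y \<subseteq> fv.span B}
   \<and> endW v ys \<subseteq> fv.span (B \<union> \<Union>(set xs))"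
proof (induction xs arbitrary: B)
  case Nil thus ?case by simp
next
  case (Cons X xs1)
  have pr: "valid D v (X # (xs1 @ ys))" using Cons.prems(1) by simp
  have vx: "valid D v (xs1 @ ys)" "X \<in> D" "endW v (xs1 @ ys) \<subseteq> X" "X \<notin> set (xs1 @ ys)"
    using pr by auto
  have XG: "X \<in> grass n k" using vx(2) DC C_grass by blast
  define B' where "B' = B \<union> X"
  have BA': "B' \<subseteq> ambient n" unfolding B'_def using Cons.prems(3) grass_sub[OF XG] by blast
  have h1: "endW v (xs1 @ ys) \<subseteq> fv.span B'"
    using vx(3) fv.span_superset[of B'] unfolding B'_def by blast
  note IH = Cons.IH[OF vx(1) h1 BA']
  have eq: "B \<union> \<Union>(set (X # xs1)) = B' \<union> \<Union>(set xs1)" unfolding B'_def by auto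
  have spm: "fv.span B \<subseteq> fv.span B'" unfolding B'_def by (rule fv.span_mono) blast
  have c1: "card {Y \<in> set xs1. \<not> Y \<subseteq> fv.span B'} \<le> card {Y \<in> set xs1. \<not> Y \<subseteq> fv.span B}"
    by (rule card_mono) (use spm in auto)
  have Xn: "X \<notin> set xs1" using vx(4) by simp
  show ?case
  proof (cases "X \<subseteq> fv.span B")
    case True
    have "fv.dim B' \<le> fv.dim B" unfolding B'_def by (rule addzero[OF Cons.prems(3) True])
    moreover have "{Y \<in> set (X # xs1). \<not> Y \<subseteq> fv.span B} = {Y \<in> set xs1. \<not> Y \<subseteq> fv.span B}"
      using True by auto
    ultimately show ?thesis using IH c1 eq by simp
  next
    case False
    have ew: "endW v (X # (xs1 @ ys)) \<subseteq> X" using endW_cons[OF pr] by blast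
    have ewB: "endW v (X # (xs1 @ ys)) \<subseteq> fv.span B" using Cons.prems(2) by simp
    have "fv.dim B' \<le> fv.dim B + 1"
      unfolding B'_def by (rule addone[OF Cons.prems(3) XG endW_H[OF pr] k1 ew ewB])
    moreover have "{Y \<in> set (X # xs1). \<not> Y \<subseteq> fv.span B} = insert X {Y \<in> set xs1. \<not> Y \<subseteq> fv.span B}"
      using False by auto
    moreover have "card (insert X {Y \<in> set xs1. \<not> Y \<subseteq> fv.span B}) = Suc (card {Y \<in> set xs1. \<not> Y \<subseteq> fv.span B})"
      using Xn by simp
    ultimately show ?thesis using IH c1 eq by simp
  qed
qed

end
end


context cov begin
context
  fixes D :: "(nat \<Rightarrow> 'a) set set" and v
  assumes DC: "D \<subseteq> C" and vH: "v \<in> Hyp"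
begin

lemma claimS:
  assumes md: "mindeg d D" and da: "\<alpha> \<le> d" and m1: "1 \<le> m" and m2: "2 * m \<le> \<alpha>"
    and ws: "valid D v ws" "length ws = m" and ws': "valid D v ws'" "length ws' = m"
    and eq: "endW v ws = endW v ws'"
  shows "set ws' \<subseteq> set ws"
proof (rule ccontr)
  assume "\<not> set ws' \<subseteq> set ws"
  hence "\<exists>x\<in>set ws'. x \<notin> set ws" by blast
  from split_list_last_prop[OF this] obtain pre U0 post where
    sp: "ws' = pre @ U0 # post" "U0 \<notin> set ws" "\<forall>z\<in>set post. z \<in> set ws" by blast
  define B where "B = \<Union>(set ws)"
  have wsne: "ws \<noteq> []" using ws(2) m1 by auto
  have BA: "B \<subseteq> ambient n" unfolding B_def using union_amb[OF DC valid_sub[OF DC vH ws(1)]] .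
  have vB: "v \<subseteq> B" unfolding B_def using v_sub[OF DC vH ws(1) wsne] .
  have "v \<union> B = B" using vB by blast
  hence dimB: "fv.dim B \<le> k - 1 + m" using fwd_dim[OF DC vH ws(1)] ws(2) unfolding B_def by simp
  have eB: "endW v ws' \<subseteq> fv.span B"
    using eq endW_sub[OF DC vH ws(1)] vB fv.span_superset[of B] unfolding B_def by blast
  have vws': "valid D v (pre @ (U0 # post))" using ws'(1) sp(1) by simp
  have R: "fv.dim (B \<union> \<Union>(set pre)) \<le> fv.dim B + card {Y \<in> set pre. \<not> Y \<subseteq> fv.span B}"
     "endW v (U0 # post) \<subseteq> fv.span (B \<union> \<Union>(set pre))"
    using rev_dim[OF DC vH vws' _ BA] eB sp(1) by auto
  have vp: "valid D v (U0 # post)" using valid_append[OF DC vH vws'] .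
  have vpost: "valid D v post" using vp by simp
  note ec = endW_cons[OF DC vH vp]
  have postB: "\<Union>(set post) \<subseteq> B" using sp(3) unfolding B_def by blast
  have ep: "endW v post \<subseteq> fv.span (B \<union> \<Union>(set pre))"
    using endW_sub[OF DC vH vpost] vB postB fv.span_superset[of "B \<union> \<Union>(set pre)"] by blast
  have U0s: "U0 \<subseteq> fv.span (B \<union> \<Union>(set pre))"
    by (rule two_hyper[OF _ endW_H[OF DC vH vp] endW_H[OF DC vH vpost] k1 _ _ _ R(2) ep])
       (use ec in auto)
  define T where "T = set ws \<union> set ws'"
  have TD: "T \<subseteq> D" unfolding T_def using valid_sub[OF DC vH ws(1)] valid_sub[OF DC vH ws'(1)] by blast
  have "\<Union>T \<subseteq> fv.span (B \<union> \<Union>(set pre))"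
  proof -
    have "\<Union>(set ws) \<union> \<Union>(set pre) \<union> \<Union>(set post) \<subseteq> B \<union> \<Union>(set pre)"
      using postB unfolding B_def by blast
    hence "\<Union>(set ws) \<union> \<Union>(set pre) \<union> \<Union>(set post) \<subseteq> fv.span (B \<union> \<Union>(set pre))"
      using fv.span_superset[of "B \<union> \<Union>(set pre)"] by blast
    moreover have "\<Union>T = \<Union>(set ws) \<union> \<Union>(set pre) \<union> \<Union>(set post) \<union> U0"
      unfolding T_def sp(1) by auto
    ultimately show ?thesis using U0s by simp
  qed
  moreover have "B \<union> \<Union>(set pre) \<subseteq> ambient n"
    using BA union_amb[OF DC] valid_sub[OF DC vH ws'(1)] sp(1) by auto
  ultimately have d1: "fv.dim (\<Union>T) \<le> fv.dim (B \<union> \<Union>(set pre))" using dim_mono_amb by blast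
  have dws': "distinct ws'" using valid_distinct[OF DC vH ws'(1)] .
  have dws: "distinct ws" using valid_distinct[OF DC vH ws(1)] .
  define c where "c = card (set ws' - set ws)"
  have U0in: "U0 \<in> set ws' - set ws" using sp by simp
  have c1: "1 \<le> c" unfolding c_def using U0in by (metis One_nat_def Suc_leI card_gt_0_iff empty_iff finite_Diff finite_set)
  have "{Y \<in> set pre. \<not> Y \<subseteq> fv.span B} \<subseteq> (set ws' - set ws) - {U0}"
  proof
    fix Y assume Y: "Y \<in> {Y \<in> set pre. \<not> Y \<subseteq> fv.span B}"
    have "Y \<notin> set ws"
    proof
      assume "Y \<in> set ws" hence "Y \<subseteq> B" unfolding B_def by blast
      thus False using Y fv.span_superset[of B] by blast
    qed
    moreover have "Y \<noteq> U0" using Y dws' sp(1) by auto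
    ultimately show "Y \<in> (set ws' - set ws) - {U0}" using Y sp(1) by auto
  qed
  hence "card {Y \<in> set pre. \<not> Y \<subseteq> fv.span B} \<le> card ((set ws' - set ws) - {U0})"
    by (intro card_mono) auto
  also have "\<dots> = c - 1" unfolding c_def using U0in by simp
  finally have cp: "card {Y \<in> set pre. \<not> Y \<subseteq> fv.span B} \<le> c - 1" .
  have cws: "card (set ws) = m" using distinct_card[OF dws] ws(2) by simp
  have cws': "card (set ws') = m" using distinct_card[OF dws'] ws'(2) by simp
  have "T = set ws \<union> (set ws' - set ws)" unfolding T_def by blast
  moreover have "card (set ws \<union> (set ws' - set ws)) = card (set ws) + card (set ws' - set ws)"
    by (rule card_Un_disjoint) auto
  ultimately have cT: "card T = m + c" unfolding c_def using cws by simp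
  have "card T \<le> m + m" unfolding T_def using card_Un_le[of "set ws" "set ws'"] cws cws' by simp
  hence "card T \<le> \<alpha>" using m2 by simp
  moreover have "T \<noteq> {}" unfolding T_def using wsne by simp
  ultimately have "k + card T \<le> fv.dim (\<Union>T) + 1" using spanA[OF DC md da TD] by blast
  thus False using d1 R(1) dimB cp cT c1 k2 by linarith
qed

end
end


context cov begin
context
  fixes D :: "(nat \<Rightarrow> 'a) set set" and v
  assumes DC: "D \<subseteq> C" and vH: "v \<in> Hyp"
begin

lemma finite_D: "finite D" by (rule finite_subset[OF DC finite_C])

lemma finite_W: "finite {ws. valid D v ws \<and> length ws = j}"
proof (rule finite_subset[OF _ finite_lists_length_eq[OF finite_D, of j]])
  show "{ws. valid D v ws \<and> length ws = j} \<subseteq> {xs. set xs \<subseteq> D \<and> length xs = j}"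
    using valid_sub[OF DC vH] by blast
qed

lemma lower:
  assumes md: "mindeg d D" and vD: "\<exists>U\<in>D. v \<subseteq> U" and jm: "j \<le> m"
  shows "(d - m) ^ j \<le> card {ws. valid D v ws \<and> length ws = j}"
  using jm
proof (induction j)
  case 0
  have "{ws. valid D v ws \<and> length ws = 0} = {[]}" by auto
  thus ?case by simp
next
  case (Suc j)
  let ?W = "{ws. valid D v ws \<and> length ws = j}"
  define E where "E ws = {U\<in>D. endW v ws \<subseteq> U} - set ws" for ws
  have E: "d - m \<le> card (E ws)" if "ws \<in> ?W" for ws
  proof -
    have vw: "valid D v ws" and lw: "length ws = j" using that by auto
    have "\<exists>U\<in>D. endW v ws \<subseteq> U"
    proof (cases ws)
      case Nil thus ?thesis using vD by simp
    next
      case (Cons U ws1)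
      thus ?thesis using endW_cons[OF DC vH, of U ws1] vw by auto
    qed
    hence "endW v ws \<in> Vert D" using endW_H[OF DC vH vw] by (auto simp: Vert_def)
    hence dd: "d \<le> card {U\<in>D. endW v ws \<subseteq> U}" using md by (auto simp: mindeg_def deg_def)
    have "card {U\<in>D. endW v ws \<subseteq> U} - card (set ws) \<le> card (E ws)"
      unfolding E_def by (rule diff_card_le_card_Diff) simp
    moreover have "card (set ws) \<le> j" using card_length lw by metis
    ultimately show ?thesis using dd Suc.prems by linarith
  qed
  have finE: "finite (E ws)" for ws unfolding E_def using finite_D by simp
  have "card (Sigma ?W E) = (\<Sum>ws\<in>?W. card (E ws))"
    by (rule card_SigmaI[OF finite_W]) (use finE in blast)
  moreover have "(\<Sum>ws\<in>?W. d - m) \<le> (\<Sum>ws\<in>?W. card (E ws))" by (rule sum_mono) (use E in blast)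
  ultimately have s1: "card ?W * (d - m) \<le> card (Sigma ?W E)" by simp
  have inj: "inj_on (\<lambda>(ws, U). U # ws) (Sigma ?W E)" by (auto simp: inj_on_def)
  have sub: "(\<lambda>(ws, U). U # ws) ` (Sigma ?W E) \<subseteq> {ws. valid D v ws \<and> length ws = Suc j}"
    by (auto simp: E_def)
  have "card (Sigma ?W E) \<le> card {ws. valid D v ws \<and> length ws = Suc j}"
    using card_mono[OF finite_W sub] card_image[OF inj] by simp
  moreover have "(d - m) ^ j \<le> card ?W" using Suc by simp
  ultimately have "(d - m) ^ j * (d - m) \<le> card {ws. valid D v ws \<and> length ws = Suc j}"
    using s1 mult_le_mono1[of "(d - m) ^ j" "card ?W" "d - m"] by linarith
  thus ?case by (simp add: mult.commute)
qed

lemma upper: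
  assumes S: "\<And>ws ws'. valid D v ws \<Longrightarrow> length ws = m \<Longrightarrow> valid D v ws' \<Longrightarrow> length ws' = m \<Longrightarrow>
     endW v ws = endW v ws' \<Longrightarrow> set ws' \<subseteq> set ws"
  shows "card {ws. valid D v ws \<and> length ws = m} \<le> m ^ m * card Hyp"
proof -
  let ?W = "{ws. valid D v ws \<and> length ws = m}"
  define F where "F h = {ws\<in>?W. endW v ws = h}" for h
  have F: "card (F h) \<le> m ^ m" for h
  proof (cases "F h = {}")
    case True thus ?thesis by simp
  next
    case False
    then obtain ws0 where w0: "ws0 \<in> F h" by blast
    have "F h \<subseteq> {xs. set xs \<subseteq> set ws0 \<and> length xs = m}"
      using w0 S unfolding F_def by auto
    hence "card (F h) \<le> card {xs. set xs \<subseteq> set ws0 \<and> length xs = m}"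
      by (intro card_mono finite_lists_length_eq) auto
    also have "\<dots> = card (set ws0) ^ m" by (rule card_lists_length_eq) simp
    also have "card (set ws0) = m"
      using w0 distinct_card valid_distinct[OF DC vH] unfolding F_def by fastforce
    finally show ?thesis .
  qed
  have "?W \<subseteq> (\<Union>h\<in>Hyp. F h)" using endW_H[OF DC vH] unfolding F_def by blast
  hence "card ?W \<le> card (\<Union>h\<in>Hyp. F h)"
    by (intro card_mono finite_UN_I finite_grass) (auto simp: F_def intro: finite_subset[OF _ finite_W])
  also have "\<dots> \<le> (\<Sum>h\<in>Hyp. card (F h))" by (rule card_UN_le[OF finite_grass])
  also have "\<dots> \<le> (\<Sum>h\<in>Hyp. m ^ m)" by (rule sum_mono) (rule F)
  finally show ?thesis by (simp add: mult.commute)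
qed

end

lemma main_bound:
  assumes da: "\<alpha> \<le> d" and m: "m = \<alpha> div 2" and big: "m ^ m * card Hyp < (d - m) ^ m"
  shows "card C \<le> d * card Hyp"
proof -
  obtain D where D: "D \<subseteq> C" "mindeg d D" "card C \<le> card D + d * card (Vert C - Vert D)"
    using core[OF finite_C] by blast
  have cV: "card (Vert C - Vert D) \<le> card Hyp" by (rule card_mono[OF finite_grass]) (auto simp: Vert_def)
  show ?thesis
  proof (cases "D = {}")
    case True
    have "d * card (Vert C - Vert D) \<le> d * card Hyp" using mult_le_mono2[OF cV] .
    moreover have "card D = 0" using True by simp
    ultimately show ?thesis using D(3) by linarith
  next
    case False
    then obtain U0 where U0: "U0 \<in> D" by blast
    have U0G: "U0 \<in> grass n k" using U0 D(1) C_grass by blast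
    define v where "v = hyp U0 {}"
    have vH: "v \<in> Hyp" and vU: "v \<subseteq> U0" using hyp[OF U0G] unfolding v_def by auto
    have m1: "1 \<le> m" and m2: "2 * m \<le> \<alpha>" using m a3 by auto
    have "(d - m) ^ m \<le> card {ws. valid D v ws \<and> length ws = m}"
      using lower[OF D(1) vH D(2), of m] U0 vU by blast
    also have "\<dots> \<le> m ^ m * card Hyp"
      by (rule upper[OF D(1) vH]) (rule claimS[OF D(1) vH D(2) da m1 m2], auto)
    finally show ?thesis using big by simp
  qed
qed

end


lemma Bq_attained:
  fixes k \<delta> \<alpha> :: nat
  assumes "\<alpha> \<ge> 1"
  shows "\<exists>C :: (nat \<Rightarrow> 'a::{finite,field}) set set. covering_code n k \<delta> \<alpha> C \<and> Bq TYPE('a) n k \<delta> \<alpha> = card C"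
proof -
  let ?S = "{card C | C :: (nat \<Rightarrow> 'a) set set. covering_code n k \<delta> \<alpha> C}"
  have "?S \<subseteq> card ` Pow (grass n k :: (nat \<Rightarrow> 'a) set set)" by (auto simp: covering_code_def)
  hence fin: "finite ?S" using finite_grass finite_subset by blast
  have "covering_code n k \<delta> \<alpha> ({} :: (nat \<Rightarrow> 'a) set set)"
    using assms by (auto simp: covering_code_def)
  hence ne: "?S \<noteq> {}" by blast
  have "Max ?S \<in> ?S" using Max_in[OF fin ne] .
  thus ?thesis unfolding Bq_def by auto
qed

theorem mainTheorem7:
  fixes k \<delta> \<alpha> :: nat
  assumes "k \<ge> 2" and "\<alpha> \<ge> 3" and "\<delta> > 0" and "int \<delta> > int \<alpha> - 2"
  shows "(\<lambda>n. real (Bq TYPE('a::{finite,field}) n k \<delta> \<alpha>))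
         \<in> O(\<lambda>n. real (card (UNIV :: 'a set)) powr ((1 + 1 / real (\<alpha> div 2)) * real (k - 1) * real n))"
proof -
  define m where "m = \<alpha> div 2"
  have m1: "m \<ge> 1" using assms(2) unfolding m_def by simp
  have dl: "\<alpha> \<le> \<delta> + 1" using assms(4) by linarith
  define q where "q = real (card (UNIV :: 'a set))"
  have "card (UNIV :: 'a set) > 0" by (simp add: card_gt_0_iff)
  hence q1: "q \<ge> 1" unfolding q_def by linarith
  define N where "N n = q ^ ((k - 1) * n)" for n
  have N0: "N n \<ge> 1" for n unfolding N_def using q1 by simp
  define r where "r n = nat \<lceil>root m (N n)\<rceil>" for n
  have rge: "real (r n) \<ge> root m (N n)" for n
    unfolding r_def using N0[of n] by (simp add: real_root_ge_zero)
  have rle: "real (r n) \<le> root m (N n) + 1" for n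
    unfolding r_def using N0[of n] by (simp add: real_root_ge_zero)
  have key: "real (Bq TYPE('a) n k \<delta> \<alpha>) \<le> (\<alpha> + m + 1 + m * r n) * N n" for n
  proof -
    obtain C :: "(nat \<Rightarrow> 'a) set set" where C: "covering_code n k \<delta> \<alpha> C" "Bq TYPE('a) n k \<delta> \<alpha> = card C"
      using Bq_attained[of \<alpha> n k \<delta>] assms(2) by auto
    interpret cov n k \<delta> \<alpha> C using assms(1,2) dl C(1) by unfold_locales auto
    define d where "d = \<alpha> + m + 1 + m * r n"
    have H: "real (card Hyp) \<le> N n"
      using card_grass[of n "k - 1", where 'a='a] unfolding N_def q_def
      by (metis of_nat_le_iff of_nat_power)
    have m0: "0 < m" using m1 by simp
    have "real (r n) ^ m \<ge> root m (N n) ^ m"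
      by (rule power_mono[OF rge]) (rule real_root_ge_zero, use N0[of n] in simp)
    hence rN: "real (r n) ^ m \<ge> N n" using real_root_pow_pos2[OF m0, of "N n"] N0[of n] by simp
    have "real (m ^ m * card Hyp) \<le> real m ^ m * N n" using H by (simp add: mult_left_mono)
    also have "\<dots> \<le> real m ^ m * real (r n) ^ m" using rN by (simp add: mult_left_mono)
    also have "\<dots> = (real m * real (r n)) ^ m" by (simp add: power_mult_distrib)
    also have "\<dots> < (real m * real (r n) + 1) ^ m" by (rule power_strict_mono) (use m0 in auto)
    also have "\<dots> \<le> real (d - m) ^ m" unfolding d_def by (rule power_mono) auto
    also have "\<dots> = real ((d - m) ^ m)" by simp
    finally have big: "m ^ m * card Hyp < (d - m) ^ m" by linarith
    have "card C \<le> d * card Hyp"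
      by (rule main_bound[OF _ m_def big]) (simp add: d_def)
    hence "real (card C) \<le> real d * real (card Hyp)" by (metis of_nat_le_iff of_nat_mult)
    also have "\<dots> \<le> real d * N n" using H by (simp add: mult_left_mono)
    finally show ?thesis using C(2) unfolding d_def by simp
  qed
  define g where "g n = q powr ((1 + 1 / real m) * real (k - 1) * real n)" for n
  have q0: "q > 0" using q1 by simp
  have Npow: "N n = q powr (real ((k - 1) * n))" for n unfolding N_def by (rule powr_realpow[OF q0, symmetric])
  have g: "g n = N n * root m (N n)" for n
  proof -
    define e where "e = real ((k - 1) * n)"
    have e: "e = real (k - 1) * real n" unfolding e_def by simp
    have Ne: "N n = q powr e" unfolding e_def by (rule Npow)
    have r: "root m (N n) = q powr (e / real m)"
      using root_powr_inverse[of m "N n"] m1 N0[of n] powr_powr[of q e "1 / real m"] unfolding Ne by simp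
    have "g n = q powr (e + e / real m)" unfolding g_def e by (simp add: algebra_simps add_divide_distrib)
    also have "\<dots> = q powr e * q powr (e / real m)" by (rule powr_add)
    also have "\<dots> = N n * root m (N n)" using r Ne by simp
    finally show ?thesis .
  qed
  have rt1: "root m (N n) \<ge> 1" for n using N0[of n] m1 by simp
  have "real (Bq TYPE('a) n k \<delta> \<alpha>) \<le> real (\<alpha> + 3 * m + 1) * g n" for n
  proof -
    have "real (Bq TYPE('a) n k \<delta> \<alpha>) \<le> (\<alpha> + m + 1 + m * r n) * N n" by (rule key)
    also have "\<dots> \<le> (\<alpha> + m + 1 + m * (root m (N n) + 1)) * N n"
      using rle[of n] N0[of n] by (intro mult_right_mono) (auto intro: mult_left_mono)
    also have "\<dots> \<le> (\<alpha> + 3 * m + 1) * (N n * root m (N n))"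
    proof -
      define \<rho> where "\<rho> = root m (N n)"
      define A where "A = real \<alpha> + 2 * real m + 1"
      have A0: "A \<ge> 0" unfolding A_def by simp
      have NN: "N n \<le> N n * \<rho>" using mult_left_mono[of 1 \<rho> "N n"] rt1[of n] N0[of n] unfolding \<rho>_def by simp
      have e1: "(real (\<alpha> + m + 1) + real m * (\<rho> + 1)) * N n = A * N n + real m * (N n * \<rho>)"
        unfolding A_def by (simp add: algebra_simps)
      have e2: "real (\<alpha> + 3 * m + 1) * (N n * \<rho>) = A * (N n * \<rho>) + real m * (N n * \<rho>)"
        unfolding A_def by (simp add: algebra_simps)
      have "A * N n \<le> A * (N n * \<rho>)" using mult_left_mono[OF NN A0] .
      thus ?thesis using e1 e2 unfolding \<rho>_def by linarith
    qed
    finally show ?thesis using g by simp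
  qed
  moreover have "g n \<ge> 0" for n unfolding g_def by simp
  ultimately have "\<forall>n. norm (real (Bq TYPE('a) n k \<delta> \<alpha>)) \<le> real (\<alpha> + 3 * m + 1) * norm (g n)"
    by simp
  hence "(\<lambda>n. real (Bq TYPE('a) n k \<delta> \<alpha>)) \<in> O(g)" by (intro bigoI) (rule always_eventually)
  thus ?thesis unfolding g_def q_def m_def .
qed

end
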